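(* Let $G$ be a finite simple (unweighted) graph with $n$ vertices. Then \[\sum_{\lambda\vdash n}[X_{P_\lambda}]X_G=1,\] i.e. $\tau_G(1)=1$.
   Context: $X_G=\sum_\kappa\prod_v x_{\kappa(v)}$ over proper colourings $\kappa:V(G)\to\{1,2,\dots\}$. $P_\lambda$ is the disjoint union of paths $P_{\lambda_1},\dots,P_{\lambda_{\ell(\lambda)}}$ ($P_n$ the path on $n$ vertices); $\{X_{P_\lambda}\}$ is a basis of the algebra of symmetric functions over $\mathbb{Q}$, and $[X_{P_\lambda}]f$ is the coefficient of $X_{P_\lambda}$ in $f$. $\tau_G(x)=\sum_\lambda [X_{P_\lambda}]X_G\, x^{\ell(\lambda)}$. *)

theory Defs
  imports Complex_Main "HOL-Library.FuncSet"
begin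

definition simple_graph :: "'a set \<Rightarrow> ('a \<Rightarrow> 'a \<Rightarrow> bool) \<Rightarrow> bool" where
  "simple_graph V E \<longleftrightarrow> finite V \<and> (\<forall>u v. E u v \<longrightarrow> E v u)
     \<and> (\<forall>v. \<not> E v v) \<and> (\<forall>u v. E u v \<longrightarrow> u \<in> V \<and> v \<in> V)"

definition proper_colourings :: "'a set \<Rightarrow> ('a \<Rightarrow> 'a \<Rightarrow> bool) \<Rightarrow> ('a \<Rightarrow> nat) set" where
  "proper_colourings V E =
     {\<kappa> \<in> V \<rightarrow>\<^sub>E {1..}. \<forall>u\<in>V. \<forall>v\<in>V. E u v \<longrightarrow> \<kappa> u \<noteq> \<kappa> v}"

text \<open>Coefficient of the monomial \<Prod>_i x_i^(\<alpha> i) in the chromatic symmetric function X_G.\<close>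
definition chrom_coeff :: "'a set \<Rightarrow> ('a \<Rightarrow> 'a \<Rightarrow> bool) \<Rightarrow> (nat \<Rightarrow> nat) \<Rightarrow> nat" where
  "chrom_coeff V E \<alpha> =
     card {\<kappa> \<in> proper_colourings V E. \<forall>i. card {v \<in> V. \<kappa> v = i} = \<alpha> i}"

definition partitions :: "nat \<Rightarrow> nat list set" where
  "partitions n = {\<mu>. sorted_wrt (\<ge>) \<mu> \<and> (\<forall>p \<in> set \<mu>. 0 < p) \<and> sum_list \<mu> = n}"

definition path_forest_V :: "nat list \<Rightarrow> (nat \<times> nat) set" where
  "path_forest_V \<mu> = {(i, j). i < length \<mu> \<and> j < \<mu> ! i}"

definition path_forest_E :: "nat list \<Rightarrow> nat \<times> nat \<Rightarrow> nat \<times> nat \<Rightarrow> bool" where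
  "path_forest_E \<mu> u v \<longleftrightarrow> u \<in> path_forest_V \<mu> \<and> v \<in> path_forest_V \<mu> \<and>
     fst u = fst v \<and> (snd v = snd u + 1 \<or> snd u = snd v + 1)"

text \<open>X_G = \<Sum>_{\<mu> \<turnstile> n} c \<mu> X_{P_\<mu>} (over \<rat>), compared monomial by monomial.\<close>
definition path_expansion :: "'a set \<Rightarrow> ('a \<Rightarrow> 'a \<Rightarrow> bool) \<Rightarrow> nat \<Rightarrow> (nat list \<Rightarrow> rat) \<Rightarrow> bool" where
  "path_expansion V E n c \<longleftrightarrow> (\<forall>\<mu>. \<mu> \<notin> partitions n \<longrightarrow> c \<mu> = 0) \<and>
     (\<forall>\<alpha>. of_nat (chrom_coeff V E \<alpha>) =
        (\<Sum>\<mu>\<in>partitions n. c \<mu> * of_nat (chrom_coeff (path_forest_V \<mu>) (path_forest_E \<mu>) \<alpha>)))"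

text \<open>[X_{P_\<mu>}] X_G for a graph on n = card V vertices (unique by the basis property).\<close>
definition path_coeff :: "'a set \<Rightarrow> ('a \<Rightarrow> 'a \<Rightarrow> bool) \<Rightarrow> nat list \<Rightarrow> rat" where
  "path_coeff V E = (THE c. path_expansion V E (card V) c)"

end

theory Submission
  imports Defs "HOL-Library.Multiset" "HOL-Combinatorics.Permutations"
begin


definition Qset :: "'b set \<Rightarrow> ('b \<Rightarrow> nat) \<Rightarrow> (nat \<Rightarrow> nat) \<Rightarrow> ('b \<Rightarrow> nat) set" where
  "Qset I w \<alpha> = {g \<in> I \<rightarrow>\<^sub>E {1..}. \<forall>i. (\<Sum>j\<in>{j\<in>I. g j = i}. w j) = \<alpha> i}"

definition Q :: "'b set \<Rightarrow> ('b \<Rightarrow> nat) \<Rightarrow> (nat \<Rightarrow> nat) \<Rightarrow> nat" where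
  "Q I w \<alpha> = card (Qset I w \<alpha>)"

lemma Qset_val_pos:
  assumes "finite I" "\<forall>j\<in>I. 0 < w j" "g \<in> Qset I w \<alpha>" "j \<in> I"
  shows "0 < \<alpha> (g j)"
proof -
  have "w j \<le> (\<Sum>j'\<in>{j'\<in>I. g j' = g j}. w j')"
    using assms by (intro member_le_sum) auto
  then show ?thesis using assms(2,3,4) unfolding Qset_def by fastforce
qed

lemma finite_Qset:
  assumes "finite I" "\<forall>j\<in>I. 0 < w j"
  shows "finite (Qset I w \<alpha>)"
proof (cases "Qset I w \<alpha> = {}")
  case True then show ?thesis by simp
next
  case False
  then obtain g0 where g0: "g0 \<in> Qset I w \<alpha>" by blast
  have "Qset I w \<alpha> \<subseteq> I \<rightarrow>\<^sub>E (g0 ` I)"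
  proof
    fix g assume g: "g \<in> Qset I w \<alpha>"
    show "g \<in> I \<rightarrow>\<^sub>E (g0 ` I)"
    proof (rule PiE_I)
      fix j assume j: "j \<in> I"
      have "0 < \<alpha> (g j)" using Qset_val_pos[OF assms g j] .
      then have "(\<Sum>j'\<in>{j'\<in>I. g0 j' = g j}. w j') \<noteq> 0" using g0 unfolding Qset_def by auto
      then have "{j'\<in>I. g0 j' = g j} \<noteq> {}" by (metis sum.empty)
      then show "g j \<in> g0 ` I" by force
    next
      fix j assume "j \<notin> I" then show "g j = undefined" using g unfolding Qset_def by auto
    qed
  qed
  moreover have "finite (I \<rightarrow>\<^sub>E (g0 ` I))" using assms by (intro finite_PiE) auto
  ultimately show ?thesis by (rule finite_subset)
qed

lemma Q_bij:
  assumes h: "bij_betw h I J" and w: "\<forall>j\<in>I. w' (h j) = w j"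
  shows "Q I w \<alpha> = Q J w' \<alpha>"
proof -
  let ?h' = "inv_into I h"
  define F where "F g = (\<lambda>y. if y \<in> J then g (?h' y) else undefined)" for g :: "_ \<Rightarrow> nat"
  define G where "G g = (\<lambda>x. if x \<in> I then g (h x) else undefined)" for g :: "_ \<Rightarrow> nat"
  have hI: "\<And>x. x \<in> I \<Longrightarrow> h x \<in> J" using h by (auto simp: bij_betw_def)
  have h'J: "\<And>y. y \<in> J \<Longrightarrow> ?h' y \<in> I" using h by (meson bij_betwE bij_betw_inv_into)
  have hh': "\<And>y. y \<in> J \<Longrightarrow> h (?h' y) = y" using h by (meson bij_betw_inv_into_right)
  have h'h: "\<And>x. x \<in> I \<Longrightarrow> ?h' (h x) = x" using h by (meson bij_betw_inv_into_left)
  have sumeq: "(\<Sum>y\<in>{y\<in>J. F g y = i}. w' y) = (\<Sum>j\<in>{j\<in>I. g j = i}. w j)" for g i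
  proof -
    have "bij_betw h {j\<in>I. g j = i} {y\<in>J. F g y = i}"
      unfolding bij_betw_def
    proof
      show "inj_on h {j \<in> I. g j = i}" using h by (metis (no_types, lifting) bij_betw_def inj_on_subset mem_Collect_eq subsetI)
      show "h ` {j \<in> I. g j = i} = {y \<in> J. F g y = i}"
        using hI h'J hh' h'h unfolding F_def by (auto simp: image_iff) (metis)
    qed
    then show ?thesis using w by (simp add: sum.reindex_bij_betw[symmetric])
  qed
  have "bij_betw F (Qset I w \<alpha>) (Qset J w' \<alpha>)"
  proof (rule bij_betw_byWitness[where f'=G])
    show "\<forall>a\<in>Qset I w \<alpha>. G (F a) = a"
      using h'h hI unfolding Qset_def F_def G_def by (auto simp: PiE_def extensional_def)
    show "\<forall>a\<in>Qset J w' \<alpha>. F (G a) = a"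
      using hh' h'J unfolding Qset_def F_def G_def by (auto simp: PiE_def extensional_def)
    show "F ` Qset I w \<alpha> \<subseteq> Qset J w' \<alpha>"
      using h'J sumeq unfolding Qset_def by (auto simp: F_def PiE_def extensional_def Pi_def)
    show "G ` Qset J w' \<alpha> \<subseteq> Qset I w \<alpha>"
    proof
      fix g assume "g \<in> G ` Qset J w' \<alpha>"
      then obtain a where a: "a \<in> Qset J w' \<alpha>" "g = G a" by blast
      have Fg: "F g = a" using a hh' h'J unfolding Qset_def F_def G_def by (auto simp: PiE_def extensional_def)
      have "(\<Sum>j\<in>{j\<in>I. g j = i}. w j) = \<alpha> i" for i
        using sumeq[of g i] Fg a(1) unfolding Qset_def by auto
      then show "g \<in> Qset I w \<alpha>" using a hI unfolding Qset_def G_def by (auto simp: PiE_def extensional_def Pi_def)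
    qed
  qed
  then show ?thesis unfolding Q_def by (rule bij_betw_same_card)
qed




lemma mset_bij:
  assumes "bij_betw h {..<length \<nu>} C" "\<forall>j<length \<nu>. \<nu>!j = w (h j)"
  shows "mset \<nu> = image_mset w (mset_set C)"
proof -
  have "mset \<nu> = mset (map (\<lambda>j. \<nu>!j) [0..<length \<nu>])" by (simp add: map_nth)
  also have "\<dots> = image_mset (\<lambda>j. \<nu>!j) (mset_set {..<length \<nu>})"
    by (simp add: mset_set_upto_eq_mset_upto)
  also have "\<dots> = image_mset (w \<circ> h) (mset_set {..<length \<nu>})"
    using assms(2) by (intro image_mset_cong) auto
  also have "\<dots> = image_mset w (image_mset h (mset_set {..<length \<nu>}))"
    by (simp add: multiset.map_comp)
  also have "image_mset h (mset_set {..<length \<nu>}) = mset_set C"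
    using assms(1) by (simp add: image_mset_mset_set bij_betw_def)
  finally show ?thesis .
qed

lemma sorted_desc_unique:
  assumes "sorted_wrt (\<ge>) (xs::nat list)" "sorted_wrt (\<ge>) ys" "mset xs = mset ys"
  shows "xs = ys"
proof -
  have "sorted (rev xs)" "sorted (rev ys)" using assms(1,2) by (simp_all add: sorted_wrt_rev)
  moreover have "mset (rev xs) = mset (rev ys)" using assms(3) by simp
  ultimately have "rev xs = rev ys" by (metis properties_for_sort)
  then show ?thesis by simp
qed

definition ptype :: "'b set \<Rightarrow> ('b \<Rightarrow> nat) \<Rightarrow> nat list" where
  "ptype C w = (SOME \<nu>. sorted_wrt (\<ge>) \<nu> \<and>
      (\<exists>h. bij_betw h {..<length \<nu>} C \<and> (\<forall>j<length \<nu>. \<nu>!j = w (h j))))"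

lemma ptype_ex:
  fixes w :: "'b \<Rightarrow> nat"
  assumes "finite C"
  shows "\<exists>\<nu>. sorted_wrt (\<ge>) \<nu> \<and> (\<exists>h. bij_betw h {..<length \<nu>} C \<and> (\<forall>j<length \<nu>. \<nu>!j = w (h j)))"
proof -
  obtain xs where xs: "distinct xs" "set xs = C" using finite_distinct_list[OF assms] by blast
  define ys where "ys = map w xs"
  define \<nu> where "\<nu> = rev (sort ys)"
  have "mset \<nu> = mset ys" by (simp add: \<nu>_def)
  then obtain p where p: "p permutes {..<length ys}" "permute_list p ys = \<nu>"
    by (rule mset_eq_permutation)
  have len: "length \<nu> = length xs" by (simp add: \<nu>_def ys_def)
  have "bij_betw (\<lambda>j. xs ! p j) {..<length \<nu>} C"
  proof -
    have "bij_betw p {..<length \<nu>} {..<length xs}"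
      using p(1) len by (simp add: ys_def permutes_imp_bij)
    moreover have "bij_betw ((!) xs) {..<length xs} C" using xs by (intro bij_betw_nth) auto
    ultimately show ?thesis using bij_betw_trans by (fastforce simp: comp_def)
  qed
  moreover have "\<forall>j<length \<nu>. \<nu>!j = w (xs ! p j)"
  proof (intro allI impI)
    fix j assume j: "j < length \<nu>"
    have "\<nu> ! j = ys ! p j" using p permute_list_nth[OF p(1)] j len by (metis length_map ys_def)
    moreover have "p j < length xs" using p(1) j len by (metis length_map lessThan_iff permutes_in_image ys_def)
    ultimately show "\<nu>!j = w (xs ! p j)" by (simp add: ys_def)
  qed
  moreover have "sorted_wrt (\<ge>) \<nu>" by (simp add: \<nu>_def sorted_wrt_rev)
  ultimately show ?thesis by blast
qed

lemma ptype_prop: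
  assumes "finite C"
  shows "sorted_wrt (\<ge>) (ptype C w)" "\<exists>h. bij_betw h {..<length (ptype C w)} C \<and> (\<forall>j<length (ptype C w). ptype C w!j = w (h j))"
  using someI_ex[OF ptype_ex[OF assms, of w]] unfolding ptype_def by blast+

lemma ptype_unique:
  assumes "finite C" "sorted_wrt (\<ge>) \<nu>" "bij_betw h {..<length \<nu>} C" "\<forall>j<length \<nu>. \<nu>!j = w (h j)"
  shows "ptype C w = \<nu>"
proof -
  obtain h' where h': "bij_betw h' {..<length (ptype C w)} C" "\<forall>j<length (ptype C w). ptype C w!j = w (h' j)"
    using ptype_prop(2)[OF assms(1)] by blast
  show ?thesis using sorted_desc_unique[OF ptype_prop(1)[OF assms(1)] assms(2)]
    mset_bij[OF h'] mset_bij[OF assms(3,4)] by simp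
qed

lemma ptype_length:
  assumes "finite C" shows "length (ptype C w) = card C"
  using ptype_prop(2)[OF assms] by (metis bij_betw_same_card card_lessThan)

lemma ptype_partition:
  assumes "finite C" "\<forall>c\<in>C. 0 < w c"
  shows "ptype C w \<in> partitions (\<Sum>c\<in>C. w c)"
proof -
  obtain h where h: "bij_betw h {..<length (ptype C w)} C" "\<forall>j<length (ptype C w). ptype C w!j = w (h j)"
    using ptype_prop(2)[OF assms(1)] by blast
  have "sum_list (ptype C w) = (\<Sum>j<length (ptype C w). w (h j))"
    using h(2) by (simp add: sum_list_sum_nth atLeast0LessThan)
  also have "\<dots> = (\<Sum>c\<in>C. w c)" using h(1) by (rule sum.reindex_bij_betw)
  finally have s: "sum_list (ptype C w) = (\<Sum>c\<in>C. w c)" .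
  have "\<forall>p\<in>set (ptype C w). 0 < p"
  proof
    fix p assume "p \<in> set (ptype C w)"
    then obtain j where j: "j < length (ptype C w)" "p = ptype C w ! j" by (auto simp: in_set_conv_nth)
    then have "h j \<in> C" using h(1) by (auto simp: bij_betw_def)
    then show "0 < p" using j h(2) assms(2) by auto
  qed
  then show ?thesis using s ptype_prop(1)[OF assms(1)] unfolding partitions_def by auto
qed

definition pb :: "nat list \<Rightarrow> (nat \<Rightarrow> nat) \<Rightarrow> nat" where
  "pb \<nu> \<alpha> = Q {..<length \<nu>} (\<lambda>j. \<nu>!j) \<alpha>"

lemma Q_ptype:
  assumes "finite C" shows "Q C w \<alpha> = pb (ptype C w) \<alpha>"
proof -
  obtain h where h: "bij_betw h {..<length (ptype C w)} C" "\<forall>j<length (ptype C w). ptype C w!j = w (h j)"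
    using ptype_prop(2)[OF assms(1)] by blast
  show ?thesis unfolding pb_def using Q_bij[OF h(1), where w'=w and w="\<lambda>j. ptype C w ! j"] h(2) by simp
qed




definition crel :: "'a set \<Rightarrow> 'a set set \<Rightarrow> ('a \<times> 'a) set" where
  "crel V S = {(x,y). x \<in> V \<and> y \<in> V \<and> (\<lambda>a b. \<exists>e\<in>S. a\<in>e \<and> b\<in>e)\<^sup>*\<^sup>* x y}"

lemma crel_sym_aux:
  assumes "(\<lambda>a b. \<exists>e\<in>S. a\<in>e \<and> b\<in>e)\<^sup>*\<^sup>* x y"
  shows "(\<lambda>a b. \<exists>e\<in>S. a\<in>e \<and> b\<in>e)\<^sup>*\<^sup>* y x"
  using assms
proof (induction rule: rtranclp_induct)
  case base then show ?case by simp
next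
  case (step y z)
  have "(\<lambda>a b. \<exists>e\<in>S. a\<in>e \<and> b\<in>e) z y" using step(2) by blast
  then show ?case using step(3) by (rule converse_rtranclp_into_rtranclp)
qed

lemma equiv_crel: "equiv V (crel V S)"
  unfolding equiv_def refl_on_def sym_def trans_def crel_def
  using crel_sym_aux by (auto intro: rtranclp_trans)

lemma crel_sub: "crel V S \<subseteq> V \<times> V" unfolding crel_def by auto

lemma const_crel:
  assumes "\<forall>e\<in>S. \<forall>x\<in>e. \<forall>y\<in>e. f x = f y" "(x,y) \<in> crel V S"
  shows "f x = f y"
proof -
  have "(\<lambda>a b. \<exists>e\<in>S. a\<in>e \<and> b\<in>e)\<^sup>*\<^sup>* x y" using assms(2) unfolding crel_def by auto
  then show ?thesis
    by (induction rule: rtranclp_induct) (use assms(1) in auto)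
qed

lemma crel_edge:
  assumes "e \<in> S" "e \<subseteq> V" "x \<in> e" "y \<in> e"
  shows "(x,y) \<in> crel V S"
  using assms unfolding crel_def by auto

definition monoc :: "('a \<Rightarrow> nat) \<Rightarrow> 'a set \<Rightarrow> bool" where
  "monoc \<kappa> e \<longleftrightarrow> (\<forall>x\<in>e. \<forall>y\<in>e. \<kappa> x = \<kappa> y)"

lemma card_classes_sum:
  assumes "equiv V R" "finite V" "R \<subseteq> V \<times> V" "\<And>x. x \<in> V \<Longrightarrow> \<kappa> x = \<phi> (R``{x})"
  shows "card {v\<in>V. \<kappa> v = i} = (\<Sum>C\<in>{C\<in>V//R. \<phi> C = i}. card C)"
proof -
  have eq: "{v\<in>V. \<kappa> v = i} = \<Union>{C\<in>V//R. \<phi> C = i}"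
  proof
    show "{v\<in>V. \<kappa> v = i} \<subseteq> \<Union>{C\<in>V//R. \<phi> C = i}"
    proof
      fix v assume v: "v \<in> {v\<in>V. \<kappa> v = i}"
      then have "R``{v} \<in> {C\<in>V//R. \<phi> C = i}" using assms(4) by (auto intro: quotientI)
      moreover have "v \<in> R``{v}" using v assms(1) equiv_class_self by fastforce
      ultimately show "v \<in> \<Union>{C\<in>V//R. \<phi> C = i}" by blast
    qed
    show "\<Union>{C\<in>V//R. \<phi> C = i} \<subseteq> {v\<in>V. \<kappa> v = i}"
    proof
      fix v assume "v \<in> \<Union>{C\<in>V//R. \<phi> C = i}"
      then obtain C where C: "C \<in> V//R" "\<phi> C = i" "v \<in> C" by blast
      then obtain x where x: "C = R``{x}" "x \<in> V" by (auto elim: quotientE)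
      have vV: "v \<in> V" using C assms(1) in_quotient_imp_subset by blast
      have "R``{v} = R``{x}" using C(3) x assms(1) by (metis Image_singleton_iff equiv_class_eq_iff)
      then show "v \<in> {v\<in>V. \<kappa> v = i}" using vV assms(4)[OF vV] C x by auto
    qed
  qed
  have "card (\<Union>{C\<in>V//R. \<phi> C = i}) = sum card {C\<in>V//R. \<phi> C = i}"
  proof (rule card_Union_disjoint)
    show "pairwise disjnt {C \<in> V // R. \<phi> C = i}"
      using quotient_disj[OF assms(1)] by (auto simp: pairwise_def disjnt_def)
    show "\<And>A. A \<in> {C \<in> V // R. \<phi> C = i} \<Longrightarrow> finite A"
      using finite_equiv_class[OF assms(2,3)] by auto
  qed
  then show ?thesis using eq by simp
qed

definition colset :: "'a set \<Rightarrow> (nat \<Rightarrow> nat) \<Rightarrow> ('a \<Rightarrow> nat) set" where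
  "colset V \<alpha> = {\<kappa> \<in> V \<rightarrow>\<^sub>E {1..}. \<forall>i. card {v\<in>V. \<kappa> v = i} = \<alpha> i}"

lemma colset_Qset: "colset V \<alpha> = Qset V (\<lambda>_. 1) \<alpha>"
  unfolding colset_def Qset_def by simp

lemma finite_colset: "finite V \<Longrightarrow> finite (colset V \<alpha>)"
  unfolding colset_Qset by (rule finite_Qset) auto

lemma count_mono:
  assumes V: "finite V" and S: "\<forall>e\<in>S. e \<subseteq> V"
  shows "card {\<kappa>\<in>colset V \<alpha>. \<forall>e\<in>S. monoc \<kappa> e} = Q (V // crel V S) card \<alpha>"
proof -
  let ?R = "crel V S"
  have eqv: "equiv V ?R" by (rule equiv_crel)
  have Rsub: "?R \<subseteq> V \<times> V" by (rule crel_sub)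
  define F where "F \<kappa> = (\<lambda>C. if C \<in> V//?R then \<kappa> (SOME x. x \<in> C) else undefined)" for \<kappa> :: "'a \<Rightarrow> nat"
  define G where "G g = (\<lambda>x. if x \<in> V then g (?R``{x}) else undefined)" for g :: "'a set \<Rightarrow> nat"
  have some_in: "(SOME x. x \<in> C) \<in> C" if "C \<in> V//?R" for C
    using in_quotient_imp_non_empty[OF eqv that] by (simp add: some_in_eq)
  have some_V: "(SOME x. x \<in> C) \<in> V" if "C \<in> V//?R" for C
    using some_in[OF that] in_quotient_imp_subset[OF eqv that] by blast
  have cls_some: "?R``{SOME x. x \<in> C} = C" if CC: "C \<in> V//?R" for C
  proof -
    obtain x where x: "C = ?R``{x}" "x \<in> V" using quotientE[OF CC] by blast
    have "(x, SOME x. x \<in> C) \<in> ?R"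
    proof -
      obtain y where y: "y = (SOME x. x \<in> C)" by blast
      have "y \<in> C" using some_in[OF CC] y by simp
      then have "(x, y) \<in> ?R" using x(1) by blast
      then show ?thesis using y by simp
    qed
    then show ?thesis using x eqv by (metis equiv_class_eq)
  qed
  have monoc_iff: "(\<forall>e\<in>S. monoc \<kappa> e) \<longleftrightarrow> (\<forall>x y. (x,y) \<in> ?R \<longrightarrow> \<kappa> x = \<kappa> y)" for \<kappa>
  proof
    assume "\<forall>e\<in>S. monoc \<kappa> e" then show "\<forall>x y. (x,y) \<in> ?R \<longrightarrow> \<kappa> x = \<kappa> y"
      using const_crel[of S \<kappa>] unfolding monoc_def by blast
  next
    assume "\<forall>x y. (x,y) \<in> ?R \<longrightarrow> \<kappa> x = \<kappa> y" then show "\<forall>e\<in>S. monoc \<kappa> e"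
      using crel_edge[of _ S V] S unfolding monoc_def by blast
  qed
  have Fval: "\<kappa> x = F \<kappa> (?R``{x})" if "x \<in> V" "\<forall>x y. (x,y) \<in> ?R \<longrightarrow> \<kappa> x = \<kappa> y" for \<kappa> x
  proof -
    have C: "?R``{x} \<in> V//?R" using that(1) by (rule quotientI)
    have "(x, SOME y. y \<in> ?R``{x}) \<in> ?R"
    proof -
      obtain y where y: "y = (SOME y. y \<in> ?R``{x})" by blast
      have "y \<in> ?R``{x}" using some_in[OF C] y by simp
      then show ?thesis using y by blast
    qed
    then show ?thesis using that(2) C unfolding F_def by auto
  qed
  have "bij_betw F {\<kappa>\<in>colset V \<alpha>. \<forall>e\<in>S. monoc \<kappa> e} (Qset (V//?R) card \<alpha>)"
  proof (rule bij_betw_byWitness[where f'=G])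
    show "\<forall>a\<in>{\<kappa> \<in> colset V \<alpha>. \<forall>e\<in>S. monoc \<kappa> e}. G (F a) = a"
    proof
      fix \<kappa> assume k: "\<kappa> \<in> {\<kappa> \<in> colset V \<alpha>. \<forall>e\<in>S. monoc \<kappa> e}"
      then have c: "\<forall>x y. (x,y) \<in> ?R \<longrightarrow> \<kappa> x = \<kappa> y" using monoc_iff by blast
      show "G (F \<kappa>) = \<kappa>"
      proof
        fix x show "G (F \<kappa>) x = \<kappa> x"
        proof (cases "x \<in> V")
          case True then show ?thesis using Fval[OF True c] unfolding G_def by simp
        next
          case False
          have "\<kappa> \<in> extensional V" using k unfolding colset_def by (simp add: PiE_def)
          then show ?thesis using False unfolding G_def by (simp add: extensional_def)
        qed
      qed
    qed
    show "\<forall>a\<in>Qset (V // ?R) card \<alpha>. F (G a) = a"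
    proof
      fix g assume g: "g \<in> Qset (V // ?R) card \<alpha>"
      show "F (G g) = g"
      proof
        fix C show "F (G g) C = g C"
        proof (cases "C \<in> V//?R")
          case True then show ?thesis using some_V[OF True] cls_some[OF True] unfolding F_def G_def by simp
        next
          case False
          have "g \<in> extensional (V//?R)" using g unfolding Qset_def by (simp add: PiE_def)
          then show ?thesis using False unfolding F_def by (simp add: extensional_def)
        qed
      qed
    qed
    show "F ` {\<kappa> \<in> colset V \<alpha>. \<forall>e\<in>S. monoc \<kappa> e} \<subseteq> Qset (V // ?R) card \<alpha>"
    proof
      fix g assume "g \<in> F ` {\<kappa> \<in> colset V \<alpha>. \<forall>e\<in>S. monoc \<kappa> e}"
      then obtain \<kappa> where k: "\<kappa> \<in> colset V \<alpha>" "\<forall>e\<in>S. monoc \<kappa> e" "g = F \<kappa>" by blast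
      then have c: "\<forall>x y. (x,y) \<in> ?R \<longrightarrow> \<kappa> x = \<kappa> y" using monoc_iff by blast
      have "card {v\<in>V. \<kappa> v = i} = (\<Sum>C\<in>{C\<in>V//?R. F \<kappa> C = i}. card C)" for i
        using card_classes_sum[OF eqv V Rsub, of \<kappa> "F \<kappa>"] Fval[OF _ c] by blast
      moreover have "F \<kappa> \<in> V//?R \<rightarrow>\<^sub>E {1..}"
      proof (rule PiE_I)
        fix C assume C: "C \<in> V//?R"
        have "\<kappa> \<in> V \<rightarrow> {1..}" using k(1) unfolding colset_def by (simp add: PiE_def)
        then show "F \<kappa> C \<in> {1..}" using some_V[OF C] C unfolding F_def by auto
      next
        fix C assume "C \<notin> V//?R" then show "F \<kappa> C = undefined" unfolding F_def by simp
      qed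
      ultimately show "g \<in> Qset (V // ?R) card \<alpha>"
        using k(1,3) unfolding Qset_def colset_def by auto
    qed
    show "G ` Qset (V // ?R) card \<alpha> \<subseteq> {\<kappa> \<in> colset V \<alpha>. \<forall>e\<in>S. monoc \<kappa> e}"
    proof
      fix \<kappa> assume "\<kappa> \<in> G ` Qset (V // ?R) card \<alpha>"
      then obtain g where g: "g \<in> Qset (V // ?R) card \<alpha>" "\<kappa> = G g" by blast
      have c: "\<forall>x y. (x,y) \<in> ?R \<longrightarrow> \<kappa> x = \<kappa> y"
      proof (intro allI impI)
        fix x y assume xy: "(x,y) \<in> ?R"
        then have "x \<in> V" "y \<in> V" "?R``{x} = ?R``{y}" using equiv_class_eq_iff[OF eqv] by blast+
        then show "\<kappa> x = \<kappa> y" using g(2) unfolding G_def by simp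
      qed
      have "card {v\<in>V. \<kappa> v = i} = (\<Sum>C\<in>{C\<in>V//?R. g C = i}. card C)" for i
        using card_classes_sum[OF eqv V Rsub, of \<kappa> g] g(2) unfolding G_def by simp
      moreover have "\<kappa> \<in> V \<rightarrow>\<^sub>E {1..}"
      proof (rule PiE_I)
        fix x assume x: "x \<in> V"
        have "g \<in> V//?R \<rightarrow> {1..}" using g(1) unfolding Qset_def by (simp add: PiE_def)
        then show "\<kappa> x \<in> {1..}" using quotientI[OF x, of ?R] x g(2) unfolding G_def by (simp add: Pi_def)
      next
        fix x assume "x \<notin> V" then show "\<kappa> x = undefined" using g(2) unfolding G_def by simp
      qed
      ultimately show "\<kappa> \<in> {\<kappa> \<in> colset V \<alpha>. \<forall>e\<in>S. monoc \<kappa> e}"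
        using g(1) c monoc_iff unfolding Qset_def colset_def by auto
    qed
  qed
  then show ?thesis unfolding Q_def by (rule bij_betw_same_card)
qed




lemma card_filter_sum:
  assumes "finite A"
  shows "(of_nat (card {a\<in>A. P a}) :: rat) = (\<Sum>a\<in>A. if P a then 1 else 0)"
  using sum.inter_filter[OF assms, of "\<lambda>_. (1::rat)" P] by simp

lemma alt_sum_pow:
  assumes "finite M"
  shows "(\<Sum>X\<in>Pow M. (-1::rat) ^ card X) = (if M = {} then 1 else 0)"
proof -
  have "(\<Prod>x\<in>M. (1::rat) - 1) = (\<Sum>X\<in>Pow M. (-1) ^ card X * (\<Prod>x\<in>X. 1) * (\<Prod>x\<in>M-X. 1))"
    by (rule prod_diff_conv_sum[OF assms])
  then have "(\<Sum>X\<in>Pow M. (-1::rat) ^ card X) = (\<Prod>x\<in>M. (0::rat))" by simp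
  also have "\<dots> = (if M = {} then 1 else 0)" using assms by (auto simp: prod_zero)
  finally show ?thesis .
qed

lemma incl_excl_count:
  assumes A: "finite A" and F: "finite F"
  shows "(of_nat (card {a\<in>A. \<forall>e\<in>F. \<not> P a e}) :: rat)
       = (\<Sum>S\<in>Pow F. (-1)^card S * of_nat (card {a\<in>A. \<forall>e\<in>S. P a e}))"
proof -
  have "(\<Sum>S\<in>Pow F. (-1)^card S * (of_nat (card {a\<in>A. \<forall>e\<in>S. P a e}) :: rat))
      = (\<Sum>S\<in>Pow F. \<Sum>a\<in>A. (-1)^card S * (if \<forall>e\<in>S. P a e then 1 else 0))"
    by (simp add: card_filter_sum[OF A] sum_distrib_left)
  also have "\<dots> = (\<Sum>a\<in>A. \<Sum>S\<in>Pow F. (-1)^card S * (if \<forall>e\<in>S. P a e then 1 else 0))"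
    by (rule sum.swap)
  also have "\<dots> = (\<Sum>a\<in>A. if \<forall>e\<in>F. \<not> P a e then 1 else 0)"
  proof (rule sum.cong[OF refl])
    fix a assume "a \<in> A"
    have fin: "finite (Pow F)" using F by simp
    have "(\<Sum>S\<in>Pow F. (-1::rat)^card S * (if \<forall>e\<in>S. P a e then 1 else 0))
        = (\<Sum>S\<in>Pow F. if \<forall>e\<in>S. P a e then (-1)^card S else 0)"
      by (intro sum.cong) auto
    also have "\<dots> = (\<Sum>S\<in>{S\<in>Pow F. \<forall>e\<in>S. P a e}. (-1)^card S)"
      by (rule sum.inter_filter[OF fin, symmetric])
    also have "{S\<in>Pow F. \<forall>e\<in>S. P a e} = Pow {e\<in>F. P a e}" by auto
    also have "(\<Sum>S\<in>Pow {e\<in>F. P a e}. (-1::rat)^card S) = (if {e\<in>F. P a e} = {} then 1 else 0)"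
      using F by (intro alt_sum_pow) auto
    also have "\<dots> = (if \<forall>e\<in>F. \<not> P a e then 1 else 0)" by auto
    finally show "(\<Sum>S\<in>Pow F. (-1::rat)^card S * (if \<forall>e\<in>S. P a e then 1 else 0))
        = (if \<forall>e\<in>F. \<not> P a e then 1 else 0)" .
  qed
  also have "\<dots> = of_nat (card {a\<in>A. \<forall>e\<in>F. \<not> P a e})"
    by (rule card_filter_sum[OF A, symmetric])
  finally show ?thesis by simp
qed

lemma length_le_sum_list:
  "\<forall>p\<in>set (xs::nat list). 0 < p \<Longrightarrow> length xs \<le> sum_list xs"
  by (induction xs) auto

lemma partitions_length: "\<mu> \<in> partitions n \<Longrightarrow> length \<mu> \<le> n"
  unfolding partitions_def using length_le_sum_list by auto

lemma finite_partitions: "finite (partitions n)"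
proof -
  have "partitions n \<subseteq> {xs. set xs \<subseteq> {..n} \<and> length xs \<le> n}"
  proof
    fix xs assume xs: "xs \<in> partitions n"
    then have "set xs \<subseteq> {..n}" unfolding partitions_def using member_le_sum_list by fastforce
    then show "xs \<in> {xs. set xs \<subseteq> {..n} \<and> length xs \<le> n}" using partitions_length[OF xs] by simp
  qed
  then show ?thesis by (rule finite_subset) (rule finite_lists_length_le, simp)
qed

definition tS :: "'a set \<Rightarrow> 'a set set \<Rightarrow> nat list" where
  "tS V S = ptype (V // crel V S) card"

definition gco :: "'a set \<Rightarrow> 'a set set \<Rightarrow> nat list \<Rightarrow> rat" where
  "gco V F \<nu> = (\<Sum>S\<in>{S\<in>Pow F. tS V S = \<nu>}. (-1)^card S)"

lemma finite_classes: "finite V \<Longrightarrow> finite (V // crel V S)"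
  using finite_quotient[OF _ crel_sub] by blast

lemma sum_card_classes:
  assumes "finite V" shows "(\<Sum>C\<in>V // crel V S. card C) = card V"
proof -
  have "card (\<Union>(V // crel V S)) = sum card (V // crel V S)"
  proof (rule card_Union_disjoint)
    show "pairwise disjnt (V // crel V S)"
      using quotient_disj[OF equiv_crel[of V S]] by (auto simp: pairwise_def disjnt_def)
    show "\<And>A. A \<in> V // crel V S \<Longrightarrow> finite A"
      using finite_equiv_class[OF assms crel_sub] by auto
  qed
  then show ?thesis using Union_quotient[OF equiv_crel, of V S] by simp
qed

lemma tS_partition:
  assumes "finite V" shows "tS V S \<in> partitions (card V)"
proof -
  have "\<forall>c\<in>V // crel V S. 0 < card c"
    using in_quotient_imp_non_empty[OF equiv_crel] finite_equiv_class[OF assms crel_sub]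
    by (auto simp: card_gt_0_iff)
  from ptype_partition[OF finite_classes[OF assms] this] show ?thesis
    unfolding tS_def by (simp only: sum_card_classes[OF assms])
qed

lemma tS_length:
  assumes "finite V" shows "length (tS V S) = card (V // crel V S)"
  unfolding tS_def using ptype_length[OF finite_classes[OF assms]] .

lemma expansion:
  assumes V: "finite V" and F: "finite F" and FV: "\<forall>e\<in>F. e \<subseteq> V"
  shows "(of_nat (card {\<kappa>\<in>colset V \<alpha>. \<forall>e\<in>F. \<not> monoc \<kappa> e}) :: rat)
       = (\<Sum>\<nu>\<in>partitions (card V). gco V F \<nu> * of_nat (pb \<nu> \<alpha>))"
proof -
  have "(of_nat (card {\<kappa>\<in>colset V \<alpha>. \<forall>e\<in>F. \<not> monoc \<kappa> e}) :: rat)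
      = (\<Sum>S\<in>Pow F. (-1)^card S * of_nat (card {\<kappa>\<in>colset V \<alpha>. \<forall>e\<in>S. monoc \<kappa> e}))"
    by (rule incl_excl_count[OF finite_colset[OF V] F])
  also have "\<dots> = (\<Sum>S\<in>Pow F. (-1)^card S * of_nat (pb (tS V S) \<alpha>))"
  proof (rule sum.cong[OF refl])
    fix S assume "S \<in> Pow F"
    then have "\<forall>e\<in>S. e \<subseteq> V" using FV by auto
    then have "card {\<kappa>\<in>colset V \<alpha>. \<forall>e\<in>S. monoc \<kappa> e} = pb (tS V S) \<alpha>"
      unfolding tS_def by (simp only: count_mono[OF V] Q_ptype[OF finite_classes[OF V]])
    then show "(-1)^card S * (of_nat (card {\<kappa>\<in>colset V \<alpha>. \<forall>e\<in>S. monoc \<kappa> e}) :: rat)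
        = (-1)^card S * of_nat (pb (tS V S) \<alpha>)" by simp
  qed
  also have "\<dots> = (\<Sum>\<nu>\<in>partitions (card V). \<Sum>S\<in>{S\<in>Pow F. tS V S = \<nu>}. (-1)^card S * of_nat (pb (tS V S) \<alpha>))"
  proof (rule sum.group[symmetric])
    show "finite (Pow F)" using F by simp
    show "finite (partitions (card V))" by (rule finite_partitions)
    show "tS V ` Pow F \<subseteq> partitions (card V)" using tS_partition[OF V] by blast
  qed
  also have "\<dots> = (\<Sum>\<nu>\<in>partitions (card V). gco V F \<nu> * of_nat (pb \<nu> \<alpha>))"
    unfolding gco_def sum_distrib_right by (intro sum.cong refl) auto
  finally show ?thesis .
qed




definition a\<nu> :: "nat list \<Rightarrow> nat \<Rightarrow> nat" where
  "a\<nu> \<nu> i = (if 1 \<le> i \<and> i \<le> length \<nu> then \<nu>!(i-1) else 0)"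

lemma partitions_pos: "\<nu> \<in> partitions n \<Longrightarrow> j < length \<nu> \<Longrightarrow> 0 < \<nu>!j"
  unfolding partitions_def by auto

lemma finite_Qset_pb:
  assumes "\<nu> \<in> partitions n" shows "finite (Qset {..<length \<nu>} (\<lambda>j. \<nu>!j) \<alpha>)"
  using partitions_pos[OF assms] by (intro finite_Qset) auto

lemma pb_diag:
  assumes \<nu>: "\<nu> \<in> partitions n" shows "pb \<nu> (a\<nu> \<nu>) \<noteq> 0"
proof -
  define g0 where "g0 = (\<lambda>j. if j < length \<nu> then j+1 else undefined)"
  have "g0 \<in> Qset {..<length \<nu>} (\<lambda>j. \<nu>!j) (a\<nu> \<nu>)"
    unfolding Qset_def
  proof (intro CollectI conjI allI)
    show "g0 \<in> {..<length \<nu>} \<rightarrow>\<^sub>E {1..}" by (rule PiE_I) (auto simp: g0_def)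
  next
    fix i
    show "(\<Sum>j\<in>{j\<in>{..<length \<nu>}. g0 j = i}. \<nu>!j) = a\<nu> \<nu> i"
    proof (cases "1 \<le> i \<and> i \<le> length \<nu>")
      case True
      then have "{j\<in>{..<length \<nu>}. g0 j = i} = {i-1}" unfolding g0_def by auto
      then show ?thesis using True unfolding a\<nu>_def by simp
    next
      case False
      then have "{j\<in>{..<length \<nu>}. g0 j = i} = {}" unfolding g0_def by auto
      then show ?thesis using False unfolding a\<nu>_def by (simp only: sum.empty) simp
    qed
  qed
  then show ?thesis unfolding pb_def Q_def using finite_Qset_pb[OF \<nu>] by (auto simp: card_eq_0_iff)
qed

lemma pb_tri:
  assumes \<nu>: "\<nu> \<in> partitions n" and \<nu>': "\<nu>' \<in> partitions n" and len: "length \<nu>' \<le> length \<nu>"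
    and nz: "pb \<nu>' (a\<nu> \<nu>) \<noteq> 0"
  shows "\<nu>' = \<nu>"
proof -
  let ?L = "length \<nu>" and ?L' = "length \<nu>'"
  obtain g where g: "g \<in> Qset {..<?L'} (\<lambda>j. \<nu>'!j) (a\<nu> \<nu>)"
    using nz unfolding pb_def Q_def by (metis card.empty ex_in_conv)
  have gsum: "(\<Sum>j\<in>{j\<in>{..<?L'}. g j = i}. \<nu>'!j) = a\<nu> \<nu> i" for i
    using g unfolding Qset_def by auto
  have into: "g j \<in> {1..?L}" if "j < ?L'" for j
  proof -
    have "0 < a\<nu> \<nu> (g j)"
      using Qset_val_pos[OF _ _ g, of j] partitions_pos[OF \<nu>'] that by auto
    then show ?thesis unfolding a\<nu>_def by (auto split: if_splits)
  qed
  have onto: "\<exists>j<?L'. g j = i" if "i \<in> {1..?L}" for i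
  proof -
    have "0 < a\<nu> \<nu> i" using that partitions_pos[OF \<nu>, of "i-1"] unfolding a\<nu>_def by auto
    then have "{j\<in>{..<?L'}. g j = i} \<noteq> {}" using gsum[of i] by (metis gr_implies_not0 sum.empty)
    then show ?thesis by auto
  qed
  have img: "g ` {..<?L'} = {1..?L}" using into onto by fastforce
  have "?L \<le> ?L'" using card_image_le[of "{..<?L'}" g] img by simp
  then have LL: "?L = ?L'" using len by simp
  have inj: "inj_on g {..<?L'}"
    by (rule eq_card_imp_inj_on) (use img LL in auto)
  define h where "h j = g j - 1" for j
  have hb: "bij_betw h {..<?L'} {..<?L}"
    unfolding bij_betw_def
  proof
    show "inj_on h {..<?L'}" unfolding h_def inj_on_def
    proof (intro ballI impI)
      fix x y assume "x \<in> {..<?L'}" "y \<in> {..<?L'}" "g x - 1 = g y - 1"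
      then show "x = y" using into[of x] into[of y] inj unfolding inj_on_def by fastforce
    qed
    show "h ` {..<?L'} = {..<?L}"
    proof
      show "h ` {..<?L'} \<subseteq> {..<?L}" using into unfolding h_def by fastforce
      show "{..<?L} \<subseteq> h ` {..<?L'}"
      proof
        fix i assume "i \<in> {..<?L}"
        then obtain j where "j < ?L'" "g j = i+1" using onto[of "i+1"] by auto
        then show "i \<in> h ` {..<?L'}" unfolding h_def by force
      qed
    qed
  qed
  have vals: "\<nu>'!j = \<nu>!(h j)" if j: "j < ?L'" for j
  proof -
    have "{j'\<in>{..<?L'}. g j' = g j} = {j}" using inj j unfolding inj_on_def by auto
    then have "\<nu>'!j = a\<nu> \<nu> (g j)" using gsum[of "g j"] by simp
    then show ?thesis using into[OF j] unfolding a\<nu>_def h_def by auto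
  qed
  have "mset \<nu>' = image_mset (\<lambda>j. \<nu>!j) (mset_set {..<?L})"
    by (rule mset_bij[OF hb]) (use vals in auto)
  moreover have "mset \<nu> = image_mset (\<lambda>j. \<nu>!j) (mset_set {..<?L})"
    by (rule mset_bij[of id]) auto
  ultimately show ?thesis
    using sorted_desc_unique \<nu> \<nu>' unfolding partitions_def by auto
qed

lemma pb_indep:
  assumes "\<forall>\<alpha>. (\<Sum>\<nu>\<in>partitions n. e \<nu> * of_nat (pb \<nu> \<alpha>)) = (0::rat)"
  shows "\<forall>\<nu>\<in>partitions n. e \<nu> = 0"
proof -
  have "\<forall>\<nu>\<in>partitions n. n - length \<nu> = k \<longrightarrow> e \<nu> = 0" for k
  proof (induction k rule: less_induct)
    case (less k)
    show ?case
    proof (intro ballI impI)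
      fix \<nu> assume \<nu>: "\<nu> \<in> partitions n" and k: "n - length \<nu> = k"
      have rest: "e \<nu>' * of_nat (pb \<nu>' (a\<nu> \<nu>)) = 0" if "\<nu>' \<in> partitions n - {\<nu>}" for \<nu>'
      proof (cases "length \<nu> < length \<nu>'")
        case True
        then have "n - length \<nu>' < k" using k partitions_length[of \<nu>' n] that by auto
        then have "e \<nu>' = 0" using less that by blast
        then show ?thesis by simp
      next
        case False
        then have "pb \<nu>' (a\<nu> \<nu>) = 0" using pb_tri[OF \<nu>, of \<nu>'] that by auto
        then show ?thesis by simp
      qed
      have "0 = (\<Sum>\<nu>'\<in>partitions n. e \<nu>' * of_nat (pb \<nu>' (a\<nu> \<nu>)))" using assms by simp
      also have "\<dots> = e \<nu> * of_nat (pb \<nu> (a\<nu> \<nu>)) + (\<Sum>\<nu>'\<in>partitions n - {\<nu>}. e \<nu>' * of_nat (pb \<nu>' (a\<nu> \<nu>)))"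
        by (rule sum.remove[OF finite_partitions \<nu>])
      also have "(\<Sum>\<nu>'\<in>partitions n - {\<nu>}. e \<nu>' * of_nat (pb \<nu>' (a\<nu> \<nu>))) = 0"
        using rest by (intro sum.neutral) auto
      finally have "e \<nu> * of_nat (pb \<nu> (a\<nu> \<nu>)) = 0" by simp
      then show "e \<nu> = 0" using pb_diag[OF \<nu>] by simp
    qed
  qed
  then show ?thesis by blast
qed




definition edges :: "('a \<Rightarrow> 'a \<Rightarrow> bool) \<Rightarrow> 'a set set" where
  "edges E = {{u,v} | u v. E u v}"

lemma edges_sub: "\<forall>u v. E u v \<longrightarrow> u \<in> V \<and> v \<in> V \<Longrightarrow> \<forall>e\<in>edges E. e \<subseteq> V"
  unfolding edges_def by auto

lemma finite_edges:
  assumes "finite V" "\<forall>u v. E u v \<longrightarrow> u \<in> V \<and> v \<in> V" shows "finite (edges E)"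
proof (rule finite_subset[of _ "Pow V"])
  show "edges E \<subseteq> Pow V" using edges_sub[OF assms(2)] by blast
  show "finite (Pow V)" using assms(1) by simp
qed

lemma chrom_edges:
  assumes irr: "\<forall>v. \<not> E v v" and inV: "\<forall>u v. E u v \<longrightarrow> u \<in> V \<and> v \<in> V"
  shows "chrom_coeff V E \<alpha> = card {\<kappa>\<in>colset V \<alpha>. \<forall>e\<in>edges E. \<not> monoc \<kappa> e}"
proof -
  have "{\<kappa> \<in> proper_colourings V E. \<forall>i. card {v \<in> V. \<kappa> v = i} = \<alpha> i}
      = {\<kappa>\<in>colset V \<alpha>. \<forall>e\<in>edges E. \<not> monoc \<kappa> e}"
  proof (rule set_eqI)
    fix \<kappa>
    have "(\<forall>u\<in>V. \<forall>v\<in>V. E u v \<longrightarrow> \<kappa> u \<noteq> \<kappa> v) \<longleftrightarrow> (\<forall>e\<in>edges E. \<not> monoc \<kappa> e)"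
    proof
      assume A: "\<forall>u\<in>V. \<forall>v\<in>V. E u v \<longrightarrow> \<kappa> u \<noteq> \<kappa> v"
      show "\<forall>e\<in>edges E. \<not> monoc \<kappa> e"
      proof
        fix e assume "e \<in> edges E"
        then obtain u v where uv: "e = {u,v}" "E u v" unfolding edges_def by blast
        then have "\<kappa> u \<noteq> \<kappa> v" using A inV by blast
        then show "\<not> monoc \<kappa> e" unfolding monoc_def uv(1) by blast
      qed
    next
      assume B: "\<forall>e\<in>edges E. \<not> monoc \<kappa> e"
      show "\<forall>u\<in>V. \<forall>v\<in>V. E u v \<longrightarrow> \<kappa> u \<noteq> \<kappa> v"
      proof (intro ballI impI)
        fix u v assume "u \<in> V" "v \<in> V" "E u v"
        then have "{u,v} \<in> edges E" unfolding edges_def by blast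
        then have "\<not> monoc \<kappa> {u,v}" using B by blast
        then show "\<kappa> u \<noteq> \<kappa> v" unfolding monoc_def by auto
      qed
    qed
    then show "\<kappa> \<in> {\<kappa> \<in> proper_colourings V E. \<forall>i. card {v \<in> V. \<kappa> v = i} = \<alpha> i}
      \<longleftrightarrow> \<kappa> \<in> {\<kappa>\<in>colset V \<alpha>. \<forall>e\<in>edges E. \<not> monoc \<kappa> e}"
      unfolding proper_colourings_def colset_def by blast
  qed
  then show ?thesis unfolding chrom_coeff_def by simp
qed

lemma label_bound:
  assumes V: "finite V" and c: "\<forall>e\<in>S. \<forall>x\<in>e. \<forall>y\<in>e. f x = f y"
  shows "card (f ` V) \<le> card (V // crel V S)"
proof -
  let ?R = "crel V S"
  have "f ` V \<subseteq> (\<lambda>C. f (SOME x. x \<in> C)) ` (V // ?R)"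
  proof
    fix y assume "y \<in> f ` V"
    then obtain v where v: "v \<in> V" "y = f v" by blast
    have C: "?R``{v} \<in> V // ?R" using v(1) by (rule quotientI)
    obtain z where z: "z = (SOME x. x \<in> ?R``{v})" by blast
    have ne: "?R``{v} \<noteq> {}" using in_quotient_imp_non_empty[OF equiv_crel C] .
    have "z \<in> ?R``{v}" unfolding z by (rule someI_ex) (use ne in blast)
    then have "(v, z) \<in> ?R" by simp
    then have "f v = f z" using const_crel[OF c] by blast
    then show "y \<in> (\<lambda>C. f (SOME x. x \<in> C)) ` (V // ?R)" using C v z by blast
  qed
  then have "card (f ` V) \<le> card ((\<lambda>C. f (SOME x. x \<in> C)) ` (V // ?R))"
    using finite_classes[OF V] by (intro card_mono) auto
  also have "\<dots> \<le> card (V // ?R)" by (rule card_image_le[OF finite_classes[OF V]])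
  finally show ?thesis .
qed

lemma crel_trans: "(x,y) \<in> crel V S \<Longrightarrow> (y,z) \<in> crel V S \<Longrightarrow> (x,z) \<in> crel V S"
  using equiv_crel[of V S] unfolding equiv_def trans_def by blast

lemma crel_sym: "(x,y) \<in> crel V S \<Longrightarrow> (y,x) \<in> crel V S"
  using equiv_crel[of V S] unfolding equiv_def sym_def by blast

lemma crel_refl: "x \<in> V \<Longrightarrow> (x,x) \<in> crel V S"
  unfolding crel_def by simp

section \<open>Path forests\<close>

lemma pfV_Sigma: "path_forest_V \<mu> = (SIGMA i:{..<length \<mu>}. {..<\<mu>!i})"
  unfolding path_forest_V_def by (rule set_eqI) auto

lemma finite_pfV: "finite (path_forest_V \<mu>)"
  unfolding pfV_Sigma by auto

lemma card_pfV: "card (path_forest_V \<mu>) = sum_list \<mu>"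
proof -
  have "card (path_forest_V \<mu>) = (\<Sum>i\<in>{..<length \<mu>}. card {..<\<mu>!i})"
    unfolding pfV_Sigma by (rule card_SigmaI) auto
  also have "\<dots> = (\<Sum>i\<in>{0..<length \<mu>}. \<mu>!i)" by (simp add: atLeast0LessThan)
  also have "\<dots> = sum_list \<mu>" by (rule sum_list_sum_nth[symmetric])
  finally show ?thesis .
qed

lemma pfE_irr: "\<forall>v. \<not> path_forest_E \<mu> v v"
  unfolding path_forest_E_def by auto

lemma pfE_in: "\<forall>u v. path_forest_E \<mu> u v \<longrightarrow> u \<in> path_forest_V \<mu> \<and> v \<in> path_forest_V \<mu>"
  unfolding path_forest_E_def by auto

lemma edges_pf:
  "e \<in> edges (path_forest_E \<mu>) \<longleftrightarrow> (\<exists>i j. i < length \<mu> \<and> Suc j < \<mu>!i \<and> e = {(i,j),(i,Suc j)})"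
proof
  assume "e \<in> edges (path_forest_E \<mu>)"
  then obtain u v where uv: "e = {u,v}" "path_forest_E \<mu> u v" unfolding edges_def by blast
  obtain i j where u: "u = (i,j)" by (cases u)
  obtain i' j' where v: "v = (i',j')" by (cases v)
  have ii: "i' = i" "j' = Suc j \<or> j = Suc j'" using uv(2) unfolding u v path_forest_E_def by auto
  show "\<exists>i j. i < length \<mu> \<and> Suc j < \<mu>!i \<and> e = {(i,j),(i,Suc j)}"
  proof (cases "j' = Suc j")
    case True
    then show ?thesis using uv ii unfolding u v path_forest_E_def path_forest_V_def by auto
  next
    case False
    then have "j = Suc j'" using ii by simp
    then show ?thesis using uv ii unfolding u v path_forest_E_def path_forest_V_def
      by (intro exI[of _ i] exI[of _ j']) auto
  qed
next
  assume "\<exists>i j. i < length \<mu> \<and> Suc j < \<mu>!i \<and> e = {(i,j),(i,Suc j)}"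
  then obtain i j where ij: "i < length \<mu>" "Suc j < \<mu>!i" "e = {(i,j),(i,Suc j)}" by blast
  then have "path_forest_E \<mu> (i,j) (i,Suc j)" unfolding path_forest_E_def path_forest_V_def by auto
  then show "e \<in> edges (path_forest_E \<mu>)" using ij unfolding edges_def by blast
qed

lemma finite_edges_pf: "finite (edges (path_forest_E \<mu>))"
  by (rule finite_edges[OF finite_pfV pfE_in])

lemma edges_pf_sub: "\<forall>e\<in>edges (path_forest_E \<mu>). e \<subseteq> path_forest_V \<mu>"
  by (rule edges_sub[OF pfE_in])

lemma proper_sub_len:
  assumes \<mu>: "\<mu> \<in> partitions n" and S: "S \<subseteq> edges (path_forest_E \<mu>)" "S \<noteq> edges (path_forest_E \<mu>)"
  shows "length \<mu> < length (tS (path_forest_V \<mu>) S)"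
proof -
  let ?V = "path_forest_V \<mu>"
  obtain e0 where e0: "e0 \<in> edges (path_forest_E \<mu>)" "e0 \<notin> S" using S by blast
  then obtain i0 j0 where ij0: "i0 < length \<mu>" "Suc j0 < \<mu>!i0" "e0 = {(i0,j0),(i0,Suc j0)}"
    using edges_pf by blast
  define f where "f = (\<lambda>(i::nat,j::nat). if i = i0 \<and> j0 < j then length \<mu> else i)"
  have c: "\<forall>e\<in>S. \<forall>x\<in>e. \<forall>y\<in>e. f x = f y"
  proof
    fix e assume e: "e \<in> S"
    then obtain i j where ij: "i < length \<mu>" "Suc j < \<mu>!i" "e = {(i,j),(i,Suc j)}"
      using S(1) edges_pf by blast
    have "\<not> (i = i0 \<and> j = j0)" using e e0(2) ij(3) ij0(3) by auto
    then have "f (i,j) = f (i, Suc j)" unfolding f_def by auto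
    then show "\<forall>x\<in>e. \<forall>y\<in>e. f x = f y" using ij(3) by auto
  qed
  have "{..length \<mu>} \<subseteq> f ` ?V"
  proof
    fix k assume k: "k \<in> {..length \<mu>}"
    show "k \<in> f ` ?V"
    proof (cases "k = length \<mu>")
      case True
      have "(i0, Suc j0) \<in> ?V" using ij0 unfolding path_forest_V_def by auto
      moreover have "f (i0, Suc j0) = k" using True unfolding f_def by simp
      ultimately show ?thesis by force
    next
      case False
      then have kl: "k < length \<mu>" using k by simp
      have "(k, 0) \<in> ?V" using partitions_pos[OF \<mu> kl] kl unfolding path_forest_V_def by auto
      moreover have "f (k, 0) = k" unfolding f_def by simp
      ultimately show ?thesis by force
    qed
  qed
  then have "Suc (length \<mu>) \<le> card (f ` ?V)"
    using card_mono[OF finite_imageI[OF finite_pfV]] by fastforce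
  also have "\<dots> \<le> card (?V // crel ?V S)" by (rule label_bound[OF finite_pfV c])
  finally show ?thesis using tS_length[OF finite_pfV] by simp
qed




lemma tS_full:
  assumes \<mu>: "\<mu> \<in> partitions n"
  shows "tS (path_forest_V \<mu>) (edges (path_forest_E \<mu>)) = \<mu>"
proof -
  let ?V = "path_forest_V \<mu>" and ?F = "edges (path_forest_E \<mu>)"
  let ?R = "crel ?V ?F"
  define row where "row i = {i} \<times> {..<\<mu>!i}" for i
  have eqv: "equiv ?V ?R" by (rule equiv_crel)
  have fstc: "fst x = fst y" if "(x,y) \<in> ?R" for x y
  proof (rule const_crel[OF _ that])
    show "\<forall>e\<in>?F. \<forall>x\<in>e. \<forall>y\<in>e. fst x = fst y"
    proof
      fix e assume "e \<in> ?F"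
      then obtain i j where "e = {(i,j),(i,Suc j)}" using edges_pf[THEN iffD1] by blast
      then show "\<forall>x\<in>e. \<forall>y\<in>e. fst x = fst y" by simp
    qed
  qed
  have conn0: "((i,0),(i,j)) \<in> ?R" if "i < length \<mu>" "j < \<mu>!i" for i j
    using that(2)
  proof (induction j)
    case 0
    then have "(i,0) \<in> ?V" using that(1) unfolding path_forest_V_def by simp
    then show ?case by (rule crel_refl)
  next
    case (Suc j)
    have e: "{(i,j),(i,Suc j)} \<in> ?F"
      by (rule edges_pf[THEN iffD2]) (use that(1) Suc.prems in blast)
    have "((i,j),(i,Suc j)) \<in> ?R"
    proof -
      have sub: "{(i,j),(i,Suc j)} \<subseteq> ?V" using edges_pf_sub[of \<mu>] e by (rule bspec)
      show ?thesis by (rule crel_edge[OF e sub]) simp_all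
    qed
    moreover have "((i,0),(i,j)) \<in> ?R" using Suc by simp
    ultimately show ?case by (rule crel_trans[rotated])
  qed
  have cls: "?R``{(i,j)} = row i" if "(i,j) \<in> ?V" for i j
  proof
    show "?R``{(i,j)} \<subseteq> row i"
    proof
      fix y assume "y \<in> ?R``{(i,j)}"
      then have "((i,j),y) \<in> ?R" by simp
      then have "fst y = i" using fstc[of "(i,j)" y] by simp
      moreover have "y \<in> ?V" using \<open>((i,j),y) \<in> ?R\<close> crel_sub by blast
      ultimately
      show "y \<in> row i" unfolding row_def path_forest_V_def by auto
    qed
    show "row i \<subseteq> ?R``{(i,j)}"
    proof
      fix y assume "y \<in> row i"
      then obtain j' where y: "y = (i,j')" "j' < \<mu>!i" unfolding row_def by auto
      have il: "i < length \<mu>" "j < \<mu>!i" using that unfolding path_forest_V_def by auto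
      have a: "((i,0),(i,j)) \<in> ?R" using conn0 il by blast
      have b: "((i,0),(i,j')) \<in> ?R" using conn0 il y by blast
      have "((i,j),(i,j')) \<in> ?R" by (rule crel_trans[OF crel_sym[OF a] b])
      then show "y \<in> ?R``{(i,j)}" using y by simp
    qed
  qed
  have quot: "?V // ?R = row ` {..<length \<mu>}"
  proof
    show "?V // ?R \<subseteq> row ` {..<length \<mu>}"
    proof
      fix C assume C: "C \<in> ?V // ?R"
      obtain x where x: "C = ?R``{x}" "x \<in> ?V" using quotientE[OF C] by blast
      obtain i j where ij: "x = (i,j)" by (cases x)
      have "i < length \<mu>" using x(2) ij unfolding path_forest_V_def by simp
      moreover have "C = row i" using cls[of i j] x ij by simp
      ultimately show "C \<in> row ` {..<length \<mu>}" by blast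
    qed
    show "row ` {..<length \<mu>} \<subseteq> ?V // ?R"
    proof
      fix C assume "C \<in> row ` {..<length \<mu>}"
      then obtain i where i: "i < length \<mu>" "C = row i" by blast
      have v: "(i,0) \<in> ?V" using partitions_pos[OF \<mu> i(1)] i(1) unfolding path_forest_V_def by auto
      then have "?R``{(i,0)} \<in> ?V // ?R" by (rule quotientI)
      then show "C \<in> ?V // ?R" using cls[OF v] i by simp
    qed
  qed
  have bij: "bij_betw row {..<length \<mu>} (?V // ?R)"
    unfolding bij_betw_def quot
  proof
    show "inj_on row {..<length \<mu>}"
    proof (rule inj_onI)
      fix a b assume a: "a \<in> {..<length \<mu>}" and b: "b \<in> {..<length \<mu>}" and ab: "row a = row b"
      have "(a,0) \<in> row a" using partitions_pos[OF \<mu>, of a] a unfolding row_def by auto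
      then have "(a,0) \<in> row b" using ab by simp
      then show "a = b" unfolding row_def by simp
    qed
  qed simp
  show ?thesis unfolding tS_def
  proof (rule ptype_unique[OF finite_classes[OF finite_pfV]])
    show "sorted_wrt (\<ge>) \<mu>" using \<mu> unfolding partitions_def by auto
    show "bij_betw row {..<length \<mu>} (?V // ?R)" by (rule bij)
    show "\<forall>j<length \<mu>. \<mu> ! j = card (row j)" unfolding row_def by simp
  qed
qed

lemma gco_pf:
  assumes \<mu>: "\<mu> \<in> partitions n"
  shows "gco (path_forest_V \<mu>) (edges (path_forest_E \<mu>)) \<mu> \<noteq> 0"
    and "gco (path_forest_V \<mu>) (edges (path_forest_E \<mu>)) \<nu> \<noteq> 0 \<Longrightarrow> \<nu> = \<mu> \<or> length \<mu> < length \<nu>"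
proof -
  let ?V = "path_forest_V \<mu>" and ?F = "edges (path_forest_E \<mu>)"
  have key: "\<nu> = \<mu> \<and> S = ?F \<or> length \<mu> < length \<nu>" if S: "S \<in> Pow ?F" and t: "tS ?V S = \<nu>" for S \<nu>
  proof (cases "S = ?F")
    case True
    then have "\<nu> = \<mu>" using t tS_full[OF \<mu>] by simp
    then show ?thesis using True by simp
  next
    case False
    have "S \<subseteq> ?F" using S by simp
    from proper_sub_len[OF \<mu> this False] show ?thesis using t by simp
  qed
  have "{S\<in>Pow ?F. tS ?V S = \<mu>} = {?F}"
  proof
    show "{S\<in>Pow ?F. tS ?V S = \<mu>} \<subseteq> {?F}"
    proof
      fix S assume "S \<in> {S\<in>Pow ?F. tS ?V S = \<mu>}"
      then have "S \<in> Pow ?F" "tS ?V S = \<mu>" by simp_all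
      from key[OF this] show "S \<in> {?F}" by simp
    qed
    have "?F \<in> Pow ?F" by simp
    then show "{?F} \<subseteq> {S\<in>Pow ?F. tS ?V S = \<mu>}" using tS_full[OF \<mu>] by simp
  qed
  then have "gco ?V ?F \<mu> = (-1) ^ card ?F" unfolding gco_def by (simp only: sum.insert_if sum.empty) simp
  then show "gco ?V ?F \<mu> \<noteq> 0" by simp
  assume nz: "gco ?V ?F \<nu> \<noteq> 0"
  have "{S\<in>Pow ?F. tS ?V S = \<nu>} \<noteq> {}"
  proof
    assume "{S\<in>Pow ?F. tS ?V S = \<nu>} = {}"
    then have "gco ?V ?F \<nu> = 0" unfolding gco_def by (simp only: sum.empty)
    then show False using nz by simp
  qed
  then obtain S where "S \<in> Pow ?F" "tS ?V S = \<nu>" by blast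
  from key[OF this] show "\<nu> = \<mu> \<or> length \<mu> < length \<nu>" by blast
qed




lemma lin_span_basis:
  fixes P :: "nat list set" and b X :: "nat list \<Rightarrow> 'x \<Rightarrow> rat" and T :: "nat list \<Rightarrow> nat list \<Rightarrow> rat"
  assumes fin: "finite P"
  and Xexp: "\<forall>\<mu>\<in>P. \<forall>\<alpha>. X \<mu> \<alpha> = (\<Sum>\<nu>\<in>P. T \<mu> \<nu> * b \<nu> \<alpha>)"
  and diag: "\<forall>\<mu>\<in>P. T \<mu> \<mu> \<noteq> 0"
  and tri: "\<forall>\<mu>\<in>P. \<forall>\<nu>\<in>P. T \<mu> \<nu> \<noteq> 0 \<longrightarrow> \<nu> = \<mu> \<or> length \<mu> < length \<nu>"
  and bound: "\<forall>\<nu>\<in>P. length \<nu> \<le> N"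
  shows "\<forall>\<nu>\<in>P. \<exists>c. \<forall>\<alpha>. b \<nu> \<alpha> = (\<Sum>\<mu>\<in>P. c \<mu> * X \<mu> \<alpha>)"
proof -
  have "\<forall>\<nu>\<in>P. N - length \<nu> = k \<longrightarrow> (\<exists>c. \<forall>\<alpha>. b \<nu> \<alpha> = (\<Sum>\<mu>\<in>P. c \<mu> * X \<mu> \<alpha>))" for k
  proof (induction k rule: less_induct)
    case (less k)
    show ?case
    proof (intro ballI impI)
      fix \<nu> assume \<nu>: "\<nu> \<in> P" and k: "N - length \<nu> = k"
      have ex: "\<forall>\<nu>'\<in>{\<nu>'\<in>P. length \<nu> < length \<nu>'}. \<exists>c. \<forall>\<alpha>. b \<nu>' \<alpha> = (\<Sum>\<mu>\<in>P. c \<mu> * X \<mu> \<alpha>)"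
      proof
        fix \<nu>' assume "\<nu>' \<in> {\<nu>'\<in>P. length \<nu> < length \<nu>'}"
        then have \<nu>': "\<nu>' \<in> P" "length \<nu> < length \<nu>'" by auto
        moreover have "length \<nu>' \<le> N" using bound \<nu>'(1) by blast
        ultimately have "N - length \<nu>' < k" using k by presburger
        then show "\<exists>c. \<forall>\<alpha>. b \<nu>' \<alpha> = (\<Sum>\<mu>\<in>P. c \<mu> * X \<mu> \<alpha>)" using less \<nu>' by blast
      qed
      obtain C where C: "\<forall>\<nu>'\<in>{\<nu>'\<in>P. length \<nu> < length \<nu>'}. \<forall>\<alpha>. b \<nu>' \<alpha> = (\<Sum>\<mu>\<in>P. C \<nu>' \<mu> * X \<mu> \<alpha>)"
        using bchoice[OF ex] by blast
      have tm: "T \<nu> \<nu>' * b \<nu>' \<alpha> = T \<nu> \<nu>' * (\<Sum>\<mu>\<in>P. C \<nu>' \<mu> * X \<mu> \<alpha>)" if "\<nu>' \<in> P - {\<nu>}" for \<nu>' \<alpha>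
      proof (cases "T \<nu> \<nu>' = 0")
        case True then show ?thesis by simp
      next
        case False
        then have "length \<nu> < length \<nu>'" using tri \<nu> that by blast
        then have "\<nu>' \<in> {\<nu>'\<in>P. length \<nu> < length \<nu>'}" using that by blast
        then show ?thesis using C by simp
      qed
      define D where "D \<mu> = (\<Sum>\<nu>'\<in>P - {\<nu>}. T \<nu> \<nu>' * C \<nu>' \<mu>)" for \<mu>
      define c where "c \<mu> = ((if \<mu> = \<nu> then 1 else 0) - D \<mu>) / T \<nu> \<nu>" for \<mu>
      have Tnz: "T \<nu> \<nu> \<noteq> 0" using diag \<nu> by blast
      have "b \<nu> \<alpha> = (\<Sum>\<mu>\<in>P. c \<mu> * X \<mu> \<alpha>)" for \<alpha>
      proof -
        have "X \<nu> \<alpha> = (\<Sum>\<nu>'\<in>P. T \<nu> \<nu>' * b \<nu>' \<alpha>)" using Xexp \<nu> by blast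
        also have "\<dots> = T \<nu> \<nu> * b \<nu> \<alpha> + (\<Sum>\<nu>'\<in>P - {\<nu>}. T \<nu> \<nu>' * b \<nu>' \<alpha>)"
          by (rule sum.remove[OF fin \<nu>])
        also have "(\<Sum>\<nu>'\<in>P - {\<nu>}. T \<nu> \<nu>' * b \<nu>' \<alpha>) = (\<Sum>\<nu>'\<in>P - {\<nu>}. T \<nu> \<nu>' * (\<Sum>\<mu>\<in>P. C \<nu>' \<mu> * X \<mu> \<alpha>))"
          using tm by (intro sum.cong) auto
        also have "\<dots> = (\<Sum>\<nu>'\<in>P - {\<nu>}. \<Sum>\<mu>\<in>P. T \<nu> \<nu>' * C \<nu>' \<mu> * X \<mu> \<alpha>)"
          by (simp add: sum_distrib_left mult.assoc)
        also have "\<dots> = (\<Sum>\<mu>\<in>P. \<Sum>\<nu>'\<in>P - {\<nu>}. T \<nu> \<nu>' * C \<nu>' \<mu> * X \<mu> \<alpha>)"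
          by (rule sum.swap)
        also have "\<dots> = (\<Sum>\<mu>\<in>P. D \<mu> * X \<mu> \<alpha>)"
          unfolding D_def by (simp add: sum_distrib_right)
        finally have eq: "X \<nu> \<alpha> - (\<Sum>\<mu>\<in>P. D \<mu> * X \<mu> \<alpha>) = T \<nu> \<nu> * b \<nu> \<alpha>"
          by simp
        have "(\<Sum>\<mu>\<in>P. c \<mu> * X \<mu> \<alpha>)
            = (\<Sum>\<mu>\<in>P. ((if \<mu> = \<nu> then 1 else 0) * X \<mu> \<alpha> - D \<mu> * X \<mu> \<alpha>) / T \<nu> \<nu>)"
          unfolding c_def by (intro sum.cong refl) (simp only: times_divide_eq_left left_diff_distrib)
        also have "\<dots> = (\<Sum>\<mu>\<in>P. (if \<mu> = \<nu> then 1 else 0) * X \<mu> \<alpha> - D \<mu> * X \<mu> \<alpha>) / T \<nu> \<nu>"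
          by (rule sum_divide_distrib[symmetric])
        also have "(\<Sum>\<mu>\<in>P. (if \<mu> = \<nu> then 1 else 0) * X \<mu> \<alpha> - D \<mu> * X \<mu> \<alpha>)
             = (\<Sum>\<mu>\<in>P. (if \<mu> = \<nu> then 1 else 0) * X \<mu> \<alpha>) - (\<Sum>\<mu>\<in>P. D \<mu> * X \<mu> \<alpha>)"
          by (rule sum_subtractf)
        also have "(\<Sum>\<mu>\<in>P. (if \<mu> = \<nu> then 1 else 0) * X \<mu> \<alpha>) = (\<Sum>\<mu>\<in>P. if \<mu> = \<nu> then X \<mu> \<alpha> else 0)"
          by (intro sum.cong refl) simp
        also have "\<dots> = X \<nu> \<alpha>" using fin \<nu> by (simp only: sum.delta) simp
        also have "(X \<nu> \<alpha> - (\<Sum>\<mu>\<in>P. D \<mu> * X \<mu> \<alpha>)) / T \<nu> \<nu> = b \<nu> \<alpha>"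
          unfolding eq using Tnz by simp
        finally show ?thesis by simp
      qed
      then show "\<exists>c. \<forall>\<alpha>. b \<nu> \<alpha> = (\<Sum>\<mu>\<in>P. c \<mu> * X \<mu> \<alpha>)" by blast
    qed
  qed
  then show ?thesis by blast
qed

lemma lin_uniq:
  fixes P :: "nat list set" and b X :: "nat list \<Rightarrow> 'x \<Rightarrow> rat" and T :: "nat list \<Rightarrow> nat list \<Rightarrow> rat"
  assumes fin: "finite P"
  and indep: "\<And>e. \<forall>\<alpha>. (\<Sum>\<nu>\<in>P. e \<nu> * b \<nu> \<alpha>) = 0 \<Longrightarrow> \<forall>\<nu>\<in>P. e \<nu> = 0"
  and Xexp: "\<forall>\<mu>\<in>P. \<forall>\<alpha>. X \<mu> \<alpha> = (\<Sum>\<nu>\<in>P. T \<mu> \<nu> * b \<nu> \<alpha>)"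
  and diag: "\<forall>\<mu>\<in>P. T \<mu> \<mu> \<noteq> 0"
  and tri: "\<forall>\<mu>\<in>P. \<forall>\<nu>\<in>P. T \<mu> \<nu> \<noteq> 0 \<longrightarrow> \<nu> = \<mu> \<or> length \<mu> < length \<nu>"
  and d: "\<forall>\<alpha>. (\<Sum>\<mu>\<in>P. d \<mu> * X \<mu> \<alpha>) = 0"
  shows "\<forall>\<mu>\<in>P. d \<mu> = 0"
proof -
  have "(\<Sum>\<nu>\<in>P. (\<Sum>\<mu>\<in>P. d \<mu> * T \<mu> \<nu>) * b \<nu> \<alpha>) = 0" for \<alpha>
  proof -
    have "(\<Sum>\<nu>\<in>P. (\<Sum>\<mu>\<in>P. d \<mu> * T \<mu> \<nu>) * b \<nu> \<alpha>) = (\<Sum>\<mu>\<in>P. d \<mu> * (\<Sum>\<nu>\<in>P. T \<mu> \<nu> * b \<nu> \<alpha>))"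
    proof -
      have "(\<Sum>\<nu>\<in>P. (\<Sum>\<mu>\<in>P. d \<mu> * T \<mu> \<nu>) * b \<nu> \<alpha>) = (\<Sum>\<nu>\<in>P. \<Sum>\<mu>\<in>P. d \<mu> * T \<mu> \<nu> * b \<nu> \<alpha>)"
        by (simp add: sum_distrib_right)
      also have "\<dots> = (\<Sum>\<mu>\<in>P. \<Sum>\<nu>\<in>P. d \<mu> * T \<mu> \<nu> * b \<nu> \<alpha>)" by (rule sum.swap)
      also have "\<dots> = (\<Sum>\<mu>\<in>P. d \<mu> * (\<Sum>\<nu>\<in>P. T \<mu> \<nu> * b \<nu> \<alpha>))"
        by (simp add: sum_distrib_left mult.assoc)
      finally show ?thesis .
    qed
    also have "\<dots> = (\<Sum>\<mu>\<in>P. d \<mu> * X \<mu> \<alpha>)" using Xexp by simp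
    finally show ?thesis using d by simp
  qed
  then have z: "\<forall>\<nu>\<in>P. (\<Sum>\<mu>\<in>P. d \<mu> * T \<mu> \<nu>) = 0" by (intro indep) blast
  have "\<forall>\<nu>\<in>P. length \<nu> = k \<longrightarrow> d \<nu> = 0" for k
  proof (induction k rule: less_induct)
    case (less k)
    show ?case
    proof (intro ballI impI)
      fix \<nu> assume \<nu>: "\<nu> \<in> P" and k: "length \<nu> = k"
      have rest: "d \<mu> * T \<mu> \<nu> = 0" if "\<mu> \<in> P - {\<nu>}" for \<mu>
      proof (cases "T \<mu> \<nu> = 0")
        case True then show ?thesis by simp
      next
        case False
        then have "length \<mu> < length \<nu>" using tri \<nu> that by blast
        then have "d \<mu> = 0" using less k that by blast
        then show ?thesis by simp
      qed
      have "0 = (\<Sum>\<mu>\<in>P. d \<mu> * T \<mu> \<nu>)" using z \<nu> by simp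
      also have "\<dots> = d \<nu> * T \<nu> \<nu> + (\<Sum>\<mu>\<in>P - {\<nu>}. d \<mu> * T \<mu> \<nu>)" by (rule sum.remove[OF fin \<nu>])
      also have "(\<Sum>\<mu>\<in>P - {\<nu>}. d \<mu> * T \<mu> \<nu>) = 0" using rest by (intro sum.neutral) blast
      finally show "d \<nu> = 0" using diag \<nu> by simp
    qed
  qed
  then show ?thesis by blast
qed




lemma Q_cong: "\<forall>j\<in>I. w j = w' j \<Longrightarrow> Q I w \<alpha> = Q I w' \<alpha>"
  using Q_bij[OF bij_betw_id, of I w' w] by simp

lemma ones_partition: "replicate n (1::nat) \<in> partitions n"
  unfolding partitions_def by (induction n) auto

lemma chrom_ones:
  assumes V: "finite V" and irr: "\<forall>v. \<not> E v v" and inV: "\<forall>u v. E u v \<longrightarrow> u \<in> V \<and> v \<in> V"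
  shows "chrom_coeff V E (a\<nu> (replicate (card V) 1)) = pb (replicate (card V) 1) (a\<nu> (replicate (card V) 1))"
proof -
  let ?n = "card V"
  let ?a = "a\<nu> (replicate ?n 1)"
  have inj: "\<kappa> u \<noteq> \<kappa> v" if k: "\<kappa> \<in> colset V ?a" and u: "u \<in> V" and v: "v \<in> V" and uv: "u \<noteq> v" for \<kappa> u v
  proof
    assume eq: "\<kappa> u = \<kappa> v"
    have "{u,v} \<subseteq> {x\<in>V. \<kappa> x = \<kappa> u}" using u v eq by auto
    then have "card {u,v} \<le> card {x\<in>V. \<kappa> x = \<kappa> u}" using V by (intro card_mono) auto
    also have "\<dots> = ?a (\<kappa> u)" using k unfolding colset_def by blast
    also have "\<dots> \<le> 1" unfolding a\<nu>_def by auto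
    finally show False using uv by simp
  qed
  have "{\<kappa> \<in> proper_colourings V E. \<forall>i. card {v \<in> V. \<kappa> v = i} = ?a i} = colset V ?a"
  proof
    show "{\<kappa> \<in> proper_colourings V E. \<forall>i. card {v \<in> V. \<kappa> v = i} = ?a i} \<subseteq> colset V ?a"
      unfolding proper_colourings_def colset_def by blast
    show "colset V ?a \<subseteq> {\<kappa> \<in> proper_colourings V E. \<forall>i. card {v \<in> V. \<kappa> v = i} = ?a i}"
    proof
      fix \<kappa> assume k: "\<kappa> \<in> colset V ?a"
      have "\<forall>u\<in>V. \<forall>v\<in>V. E u v \<longrightarrow> \<kappa> u \<noteq> \<kappa> v"
      proof (intro ballI impI)
        fix u v assume "u \<in> V" "v \<in> V" "E u v"
        moreover then have "u \<noteq> v" using irr by blast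
        ultimately show "\<kappa> u \<noteq> \<kappa> v" using inj[OF k] by blast
      qed
      then show "\<kappa> \<in> {\<kappa> \<in> proper_colourings V E. \<forall>i. card {v \<in> V. \<kappa> v = i} = ?a i}"
        using k unfolding proper_colourings_def colset_def by blast
    qed
  qed
  then have "chrom_coeff V E ?a = Q V (\<lambda>_. 1) ?a"
    unfolding chrom_coeff_def Q_def colset_Qset by simp
  also obtain h where h: "bij_betw h V {..<?n}" using finite_same_card_bij[OF V, of "{..<?n}"] by auto
  then have "Q V (\<lambda>_. 1) ?a = Q {..<?n} (\<lambda>_. 1) ?a" by (rule Q_bij) simp
  also have "\<dots> = pb (replicate ?n 1) ?a" unfolding pb_def length_replicate by (rule Q_cong) simp
  finally show ?thesis .
qed

theorem main_aux:
  fixes V :: "'a set" and E :: "'a \<Rightarrow> 'a \<Rightarrow> bool"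
  assumes "simple_graph V E"
  shows "(\<Sum>\<mu>\<in>partitions (card V). path_coeff V E \<mu>) = 1"
proof -
  have V: "finite V" and irr: "\<forall>v. \<not> E v v" and inV: "\<forall>u v. E u v \<longrightarrow> u \<in> V \<and> v \<in> V"
    using assms unfolding simple_graph_def by auto
  let ?n = "card V"
  let ?P = "partitions ?n"
  define XG where "XG \<alpha> = (of_nat (chrom_coeff V E \<alpha>) :: rat)" for \<alpha>
  define X where "X \<mu> \<alpha> = (of_nat (chrom_coeff (path_forest_V \<mu>) (path_forest_E \<mu>) \<alpha>) :: rat)" for \<mu> \<alpha>
  define b where "b \<nu> \<alpha> = (of_nat (pb \<nu> \<alpha>) :: rat)" for \<nu> \<alpha>
  define T where "T \<mu> \<nu> = gco (path_forest_V \<mu>) (edges (path_forest_E \<mu>)) \<nu>" for \<mu> \<nu>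
  define g where "g \<nu> = gco V (edges E) \<nu>" for \<nu>
  have fin: "finite ?P" by (rule finite_partitions)
  have cardP: "card (path_forest_V \<mu>) = ?n" if "\<mu> \<in> ?P" for \<mu>
    using that card_pfV unfolding partitions_def by simp
  have XGexp: "\<forall>\<alpha>. XG \<alpha> = (\<Sum>\<nu>\<in>?P. g \<nu> * b \<nu> \<alpha>)"
    unfolding XG_def g_def b_def chrom_edges[OF irr inV]
    using expansion[OF V finite_edges[OF V inV] edges_sub[OF inV]] by blast
  have Xexp: "\<forall>\<mu>\<in>?P. \<forall>\<alpha>. X \<mu> \<alpha> = (\<Sum>\<nu>\<in>?P. T \<mu> \<nu> * b \<nu> \<alpha>)"
  proof (intro ballI allI)
    fix \<mu> \<alpha> assume \<mu>: "\<mu> \<in> ?P"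
    have "X \<mu> \<alpha> = (\<Sum>\<nu>\<in>partitions (card (path_forest_V \<mu>)). T \<mu> \<nu> * b \<nu> \<alpha>)"
      unfolding X_def T_def b_def chrom_edges[OF pfE_irr pfE_in]
      by (rule expansion[OF finite_pfV finite_edges_pf edges_pf_sub])
    then show "X \<mu> \<alpha> = (\<Sum>\<nu>\<in>?P. T \<mu> \<nu> * b \<nu> \<alpha>)" using cardP[OF \<mu>] by simp
  qed
  have diag: "\<forall>\<mu>\<in>?P. T \<mu> \<mu> \<noteq> 0" unfolding T_def using gco_pf(1) by blast
  have tri: "\<forall>\<mu>\<in>?P. \<forall>\<nu>\<in>?P. T \<mu> \<nu> \<noteq> 0 \<longrightarrow> \<nu> = \<mu> \<or> length \<mu> < length \<nu>"
    unfolding T_def using gco_pf(2) by blast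
  have bound: "\<forall>\<nu>\<in>?P. length \<nu> \<le> ?n" using partitions_length by blast
  have indep: "\<forall>\<nu>\<in>?P. e \<nu> = 0" if "\<forall>\<alpha>. (\<Sum>\<nu>\<in>?P. e \<nu> * b \<nu> \<alpha>) = 0" for e
    using pb_indep that unfolding b_def by blast
  have bspan: "\<forall>\<nu>\<in>?P. \<exists>c. \<forall>\<alpha>. b \<nu> \<alpha> = (\<Sum>\<mu>\<in>?P. c \<mu> * X \<mu> \<alpha>)"
    by (rule lin_span_basis[OF fin Xexp diag tri bound])
  obtain C where C: "\<forall>\<nu>\<in>?P. \<forall>\<alpha>. b \<nu> \<alpha> = (\<Sum>\<mu>\<in>?P. C \<nu> \<mu> * X \<mu> \<alpha>)"
    using bchoice[OF bspan] by blast
  define c0 where "c0 \<mu> = (if \<mu> \<in> ?P then (\<Sum>\<nu>\<in>?P. g \<nu> * C \<nu> \<mu>) else 0)" for \<mu>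
  have c0exp: "XG \<alpha> = (\<Sum>\<mu>\<in>?P. c0 \<mu> * X \<mu> \<alpha>)" for \<alpha>
  proof -
    have "XG \<alpha> = (\<Sum>\<nu>\<in>?P. g \<nu> * (\<Sum>\<mu>\<in>?P. C \<nu> \<mu> * X \<mu> \<alpha>))"
      using XGexp C by simp
    also have "\<dots> = (\<Sum>\<nu>\<in>?P. \<Sum>\<mu>\<in>?P. g \<nu> * C \<nu> \<mu> * X \<mu> \<alpha>)"
      by (simp add: sum_distrib_left mult.assoc)
    also have "\<dots> = (\<Sum>\<mu>\<in>?P. \<Sum>\<nu>\<in>?P. g \<nu> * C \<nu> \<mu> * X \<mu> \<alpha>)" by (rule sum.swap)
    also have "\<dots> = (\<Sum>\<mu>\<in>?P. c0 \<mu> * X \<mu> \<alpha>)"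
      unfolding c0_def by (intro sum.cong refl) (simp add: sum_distrib_right)
    finally show ?thesis .
  qed
  have pe: "path_expansion V E ?n c0"
    unfolding path_expansion_def using c0exp unfolding XG_def X_def c0_def by auto
  have uniq: "c = c0" if c: "path_expansion V E ?n c" for c
  proof
    fix \<mu>
    show "c \<mu> = c0 \<mu>"
    proof (cases "\<mu> \<in> ?P")
      case False
      then show ?thesis using c unfolding path_expansion_def c0_def by simp
    next
      case True
      define d where "d \<mu> = c \<mu> - c0 \<mu>" for \<mu>
      have "\<forall>\<alpha>. (\<Sum>\<mu>\<in>?P. d \<mu> * X \<mu> \<alpha>) = 0"
      proof
        fix \<alpha>
        have "XG \<alpha> = (\<Sum>\<mu>\<in>?P. c \<mu> * X \<mu> \<alpha>)" using c unfolding path_expansion_def XG_def X_def by blast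
        then have "(\<Sum>\<mu>\<in>?P. c \<mu> * X \<mu> \<alpha>) - (\<Sum>\<mu>\<in>?P. c0 \<mu> * X \<mu> \<alpha>) = 0" using c0exp by simp
        then show "(\<Sum>\<mu>\<in>?P. d \<mu> * X \<mu> \<alpha>) = 0"
          unfolding d_def by (simp add: left_diff_distrib sum_subtractf)
      qed
      note L = lin_uniq[where P="?P" and b=b and X=X and T=T and d=d, OF fin indep Xexp diag tri this]
      then have "\<forall>\<mu>\<in>?P. d \<mu> = 0" .
      then show ?thesis using True unfolding d_def by simp
    qed
  qed
  have pc: "path_coeff V E = c0"
    unfolding path_coeff_def
  proof (rule the_equality)
    show "path_expansion V E ?n c0" by (rule pe)
    show "\<And>c. path_expansion V E ?n c \<Longrightarrow> c = c0" by (rule uniq)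
  qed
  let ?a = "a\<nu> (replicate ?n 1)"
  let ?N = "(of_nat (pb (replicate ?n 1) ?a) :: rat)"
  have Nnz: "?N \<noteq> 0" using pb_diag[OF ones_partition] by simp
  have XGa: "XG ?a = ?N" unfolding XG_def using chrom_ones[OF V irr inV] by simp
  have Xa: "X \<mu> ?a = ?N" if "\<mu> \<in> ?P" for \<mu>
  proof -
    have cp: "card (path_forest_V \<mu>) = ?n" by (rule cardP[OF that])
    have "chrom_coeff (path_forest_V \<mu>) (path_forest_E \<mu>) (a\<nu> (replicate (card (path_forest_V \<mu>)) 1))
       = pb (replicate (card (path_forest_V \<mu>)) 1) (a\<nu> (replicate (card (path_forest_V \<mu>)) 1))"
      by (rule chrom_ones[OF finite_pfV pfE_irr pfE_in])
    then show ?thesis unfolding X_def cp by simp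
  qed
  have "?N = (\<Sum>\<mu>\<in>?P. c0 \<mu> * ?N)" using c0exp[of ?a] XGa Xa by simp
  also have "\<dots> = (\<Sum>\<mu>\<in>?P. c0 \<mu>) * ?N" by (simp add: sum_distrib_right)
  finally have "(\<Sum>\<mu>\<in>?P. c0 \<mu>) = 1" using Nnz by simp
  then show ?thesis using pc by simp
qed


theorem theorem3p4:
  fixes V :: "'a set" and E :: "'a \<Rightarrow> 'a \<Rightarrow> bool"
  assumes "simple_graph V E"
  shows "(\<Sum>\<mu>\<in>partitions (card V). path_coeff V E \<mu>) = 1"
  using main_aux[OF assms] .

end
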